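(* Let $\mathfrak{R}$ be a $3$-torsion free prime alternative ring containing a nontrivial idempotent $e_1$. Then every multiplicative Lie $3$-derivation $\mathcal{D}$ of $\mathfrak{R}$ is almost additive, i.e. $\mathcal{D}(a+b)-\mathcal{D}(a)-\mathcal{D}(b)\in\mathcal{Z}(\mathfrak{R})$ for all $a,b\in\mathfrak{R}$.
   Context: Rings are not assumed associative or unital. $\mathfrak{R}$ is alternative if $(x,x,y)=0=(y,x,x)$ for all $x,y$, where $(x,y,z)=(xy)z-x(yz)$; it is $3$-torsion free if $3x=0$ implies $x=0$; it is prime if $\mathfrak{A}\mathfrak{B}\ne0$ for any two nonzero ideals $\mathfrak{A},\mathfrak{B}$. $[x,y]=xy-yx$; $\mathcal{Z}(\mathfrak{R})=\{r: [r,x]=0\ \forall x\in\mathfrak{R}\}$. A map $\mathcal{D}\colon\mathfrak{R}\to\mathfrak{R}$, not necessarily additive, is a multiplicative Lie $3$-derivation if $\mathcal{D}([[x,y],w])=[[\mathcal{D}(x),y],w]+[[x,\mathcal{D}(y)],w]+[[x,y],\mathcal{D}(w)]$ for all $x,y,w\in\mathfrak{R}$. A nontrivial idempotent is $e_1\ne0$ with $e_1^2=e_1$ which is not a multiplicative identity. *)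

theory Defs
  imports Main
begin

definition nonassoc_ring :: "'a::{ab_group_add,times} itself \<Rightarrow> bool" where
  "nonassoc_ring _ \<longleftrightarrow>
     (\<forall>x y z::'a. x * (y + z) = x * y + x * z) \<and>
     (\<forall>x y z::'a. (x + y) * z = x * z + y * z)"

definition assoc :: "'a::{minus,times} \<Rightarrow> 'a \<Rightarrow> 'a \<Rightarrow> 'a" where
  "assoc x y z = (x * y) * z - x * (y * z)"

definition alternative :: "'a::{ab_group_add,times} itself \<Rightarrow> bool" where
  "alternative _ \<longleftrightarrow> (\<forall>x y::'a. assoc x x y = 0 \<and> assoc y x x = 0)"

definition three_torsion_free :: "'a::ab_group_add itself \<Rightarrow> bool" where
  "three_torsion_free _ \<longleftrightarrow> (\<forall>x::'a. x + x + x = 0 \<longrightarrow> x = 0)"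

definition ring_ideal :: "'a::{ab_group_add,times} set \<Rightarrow> bool" where
  "ring_ideal I \<longleftrightarrow> 0 \<in> I \<and> (\<forall>a\<in>I. \<forall>b\<in>I. a - b \<in> I) \<and>
     (\<forall>a\<in>I. \<forall>r. r * a \<in> I \<and> a * r \<in> I)"

text \<open>Prime: AB \<noteq> 0 for nonzero ideals A, B.  The product AB is the additive
subgroup generated by all products ab, so AB \<noteq> 0 iff some ab \<noteq> 0.\<close>
definition prime_ring :: "'a::{ab_group_add,times} itself \<Rightarrow> bool" where
  "prime_ring _ \<longleftrightarrow> (\<forall>A B :: 'a set. ring_ideal A \<and> ring_ideal B \<and> A \<noteq> {0} \<and> B \<noteq> {0}
      \<longrightarrow> (\<exists>a\<in>A. \<exists>b\<in>B. a * b \<noteq> 0))"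

definition commutator :: "'a::{minus,times} \<Rightarrow> 'a \<Rightarrow> 'a" where
  "commutator x y = x * y - y * x"

definition center :: "'a::{ab_group_add,times} set" where
  "center = {r. \<forall>x. commutator r x = 0}"

definition mult_lie_3_derivation :: "('a::{ab_group_add,times} \<Rightarrow> 'a) \<Rightarrow> bool" where
  "mult_lie_3_derivation D \<longleftrightarrow> (\<forall>x y w.
     D (commutator (commutator x y) w) =
       commutator (commutator (D x) y) w + commutator (commutator x (D y)) w
       + commutator (commutator x y) (D w))"

end

theory Submission
  imports Defs
begin

locale altr =
  fixes e :: "'a::{ab_group_add,times}"
  assumes distl: "\<And>x y z::'a. x * (y + z) = x * y + x * z"
  and distr: "\<And>x y z::'a. (x + y) * z = x * z + y * z"
  and altL: "\<And>x y::'a. assoc x x y = 0"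
  and altR: "\<And>x y::'a. assoc y x x = 0"
  and idem: "e * e = e"
begin

lemma mz_l[simp]: "0 * (x::'a) = 0"
proof -
  have "0 * x = 0 * x + 0 * x" using distr[of 0 0 x] by simp
  thus ?thesis by simp
qed

lemma mz_r[simp]: "(x::'a) * 0 = 0"
proof -
  have "x * 0 = x * 0 + x * 0" using distl[of x 0 0] by simp
  thus ?thesis by simp
qed

lemma mneg_l[simp]: "(- (x::'a)) * y = - (x * y)"
proof -
  have "(- x) * y + x * y = 0" using distr[of "-x" x y] by simp
  thus ?thesis by (simp add: eq_neg_iff_add_eq_0)
qed

lemma mneg_r[simp]: "(x::'a) * (- y) = - (x * y)"
proof -
  have "x * (- y) + x * y = 0" using distl[of x "-y" y] by simp
  thus ?thesis by (simp add: eq_neg_iff_add_eq_0)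
qed

lemma mdiff_l[simp]: "((x::'a) - y) * z = x * z - y * z"
  using distr[of x "-y" z] by simp

lemma mdiff_r[simp]: "(x::'a) * (y - z) = x * y - x * z"
  using distl[of x y "-z"] by simp

lemmas madd[simp] = distl distr

lemma assoc_eq: "((p::'a) * q) * r = p * (q * r) + assoc p q r"
  by (simp add: assoc_def)

lemma assoc_add1: "assoc ((x::'a) + y) z w = assoc x z w + assoc y z w"
  by (simp add: assoc_def algebra_simps)
lemma assoc_add2: "assoc (z::'a) (x + y) w = assoc z x w + assoc z y w"
  by (simp add: assoc_def algebra_simps)
lemma assoc_add3: "assoc (z::'a) w (x + y) = assoc z w x + assoc z w y"
  by (simp add: assoc_def algebra_simps)

lemma alt1: "assoc (x::'a) y z = - assoc y x z"
proof -
  have "assoc (x+y) (x+y) z = 0" by (rule altL)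
  hence "assoc x x z + assoc x y z + (assoc y x z + assoc y y z) = 0"
    by (simp add: assoc_add1 assoc_add2 algebra_simps)
  hence "assoc x y z + assoc y x z = 0" by (simp add: altL)
  thus ?thesis by (simp add: eq_neg_iff_add_eq_0)
qed

lemma alt2: "assoc (x::'a) y z = - assoc x z y"
proof -
  have "assoc x (y+z) (y+z) = 0" by (rule altR)
  hence "assoc x y y + assoc x y z + (assoc x z y + assoc x z z) = 0"
    by (simp add: assoc_add3 assoc_add2 algebra_simps)
  hence "assoc x y z + assoc x z y = 0" by (simp add: altR)
  thus ?thesis by (simp add: eq_neg_iff_add_eq_0)
qed

lemma cyc: "assoc (x::'a) y z = assoc y z x"
  using alt1[of x y z] alt2[of y x z] by simp

lemma flex: "assoc (x::'a) y x = 0"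
  using alt1[of x y x] altR[of y x] by simp

lemma teich: "assoc ((a::'a)*b) c d - assoc a (b*c) d + assoc a b (c*d) = a * assoc b c d + assoc a b c * d"
  by (simp add: assoc_def algebra_simps)

lemma FG:
  fixes x y z :: 'a
  shows "assoc x (x*y) z = assoc x y z * x" and "assoc x (y*x) z = x * assoc x y z"
proof -
  define S where "S = assoc (x*x) y z"
  define F where "F = assoc x (x*y) z"
  define G where "G = assoc x (y*x) z"
  define Fz where "Fz = assoc x (x*z) y"
  define a where "a = assoc x y z"
  have i: "S - F = x * a"
    using teich[of x x y z] altL[of x y] altL[of x "y*z"] by (simp add: S_def F_def a_def)
  have i2: "assoc (x*x) z y - Fz = x * assoc x z y"
    using teich[of x x z y] altL[of x z] altL[of x "z*y"] by (simp add: Fz_def)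
  have c1: "assoc (x*x) z y = - S" using alt2[of "x*x" y z] by (simp add: S_def)
  have c2: "assoc x z y = - a" using alt2[of x y z] by (simp add: a_def)
  have i2': "Fz = x * a - S" using i2 c1 c2 by (simp add: algebra_simps)
  have i3: "- assoc z (y*x) x + assoc z y (x*x) = assoc z y x * x"
    using teich[of z y x x] altR[of "z*y" x] altR[of y x] by simp
  have d1: "assoc z (y*x) x = - G"
    using cyc[of z "y*x" x] cyc[of "y*x" x z] alt2[of x z "y*x"] by (simp add: G_def)
  have d2: "assoc z y (x*x) = - S"
    using cyc[of z y "x*x"] alt1[of y "x*x" z] by (simp add: S_def)
  have d3: "assoc z y x = - a"
    using cyc[of z y x] alt1[of y x z] by (simp add: a_def)
  have i3': "G - S = - (a * x)" using i3 d1 d2 d3 by (simp add: algebra_simps)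
  have v: "assoc (x*y) x z - G + assoc x y (x*z) = x * assoc y x z"
    using teich[of x y x z] flex[of x y] by (simp add: G_def)
  have e1: "assoc (x*y) x z = - F" using alt1[of "x*y" x z] by (simp add: F_def)
  have e2: "assoc x y (x*z) = - Fz" using alt2[of x y "x*z"] by (simp add: Fz_def)
  have e3: "assoc y x z = - a" using alt1[of y x z] by (simp add: a_def)
  have v': "- F - G - Fz = - (x * a)" using v e1 e2 e3 by (simp add: algebra_simps)
  have G: "G = x * a" using v' i2' i by (simp add: algebra_simps)
  have F: "F = a * x" using G i3' i by (simp add: algebra_simps)
  show "assoc x (x*y) z = assoc x y z * x" using F by (simp add: F_def a_def)
  show "assoc x (y*x) z = x * assoc x y z" using G by (simp add: G_def a_def)
qed

lemma moufL: "(((x::'a)*a)*x)*y = x*(a*(x*y))"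
proof -
  have "((x*a)*x)*y = (x*a)*(x*y) + assoc (x*a) x y" by (rule assoc_eq)
  also have "(x*a)*(x*y) = x*(a*(x*y)) + assoc x a (x*y)" by (rule assoc_eq)
  also have "assoc (x*a) x y = - (assoc x a y * x)"
    using alt1[of "x*a" x y] FG(1)[of x a y] by simp
  also have "assoc x a (x*y) = assoc x a y * x"
    using alt2[of x a "x*y"] FG(1)[of x y a] alt2[of x y a] by simp
  finally show ?thesis by simp
qed

lemma moufM: "((x::'a)*a)*(y*x) = (x*(a*y))*x"
proof -
  have "((x*a)*y)*x = (x*a)*(y*x) + assoc (x*a) y x" by (rule assoc_eq)
  moreover have "(x*a)*y = x*(a*y) + assoc x a y" by (rule assoc_eq)
  moreover have "assoc (x*a) y x = assoc x a y * x"
    using cyc[of "x*a" y x] cyc[of y x "x*a"] FG(1)[of x a y] by simp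
  ultimately show ?thesis by (simp add: algebra_simps)
qed

lemma moufR: "(y::'a)*((x*a)*x) = ((y*x)*a)*x"
proof -
  have fl: "(x*a)*x = x*(a*x)" using flex[of x a] by (simp add: assoc_def)
  have "((y*x)*a)*x = (y*x)*(a*x) + assoc (y*x) a x" by (rule assoc_eq)
  also have "(y*x)*(a*x) = y*(x*(a*x)) + assoc y x (a*x)" by (rule assoc_eq)
  also have "assoc (y*x) a x = x * assoc x y a"
    using cyc[of "y*x" a x] cyc[of a x "y*x"] FG(2)[of x y a] by simp
  also have "assoc y x (a*x) = - (x * assoc x y a)"
    using cyc[of y x "a*x"] FG(2)[of x a y] alt2[of x a y] by simp
  finally show ?thesis using fl by simp
qed

lemma ee1[simp]: "e*(e*(z::'a)) = e*z"
  using altL[where x=e and y=z] idem by (simp add: assoc_def)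
lemma ee2[simp]: "((z::'a)*e)*e = z*e"
  using altR[where x=e and y=z] idem by (simp add: assoc_def)
lemma efl: "(e*(z::'a))*e = e*(z*e)"
  using flex[of e z] by (simp add: assoc_def)

lemma E1: "(e*(x::'a))*y - e*(x*y) = -((x*e)*y - x*(e*y))"
  using alt1[of e x y] by (simp add: assoc_def)
lemma E2: "((x::'a)*y)*e - x*(y*e) = -((x*e)*y - x*(e*y))"
  using alt2[of x e y] by (simp add: assoc_def)

lemma E1': "e*((x::'a)*y) = (e*x)*y + (x*e)*y - x*(e*y)"
  using E1[of x y] by (simp add: algebra_simps)
lemma E2': "((x::'a)*y)*e = x*(y*e) - (x*e)*y + x*(e*y)"
  using E2[of x y] by (simp add: algebra_simps)

definition R11 :: "'a set" where "R11 = {x. e*x = x \<and> x*e = x}"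
definition R12 :: "'a set" where "R12 = {x. e*x = x \<and> x*e = 0}"
definition R21 :: "'a set" where "R21 = {x. e*x = 0 \<and> x*e = x}"
definition R22 :: "'a set" where "R22 = {x. e*x = 0 \<and> x*e = 0}"

lemma in11[simp]: "x \<in> R11 \<longleftrightarrow> e*x = x \<and> x*e = x" by (simp add: R11_def)
lemma in12[simp]: "x \<in> R12 \<longleftrightarrow> e*x = x \<and> x*e = 0" by (simp add: R12_def)
lemma in21[simp]: "x \<in> R21 \<longleftrightarrow> e*x = 0 \<and> x*e = x" by (simp add: R21_def)
lemma in22[simp]: "x \<in> R22 \<longleftrightarrow> e*x = 0 \<and> x*e = 0" by (simp add: R22_def)

definition p11 :: "'a \<Rightarrow> 'a" where "p11 x = (e*x)*e"
definition p12 :: "'a \<Rightarrow> 'a" where "p12 x = e*x - (e*x)*e"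
definition p21 :: "'a \<Rightarrow> 'a" where "p21 x = x*e - (e*x)*e"
definition p22 :: "'a \<Rightarrow> 'a" where "p22 x = x - e*x - x*e + (e*x)*e"

lemma decomp: "x = p11 x + p12 x + p21 x + p22 x"
  by (simp add: p11_def p12_def p21_def p22_def)

lemma p11_in: "p11 x \<in> R11"
  by (simp add: p11_def efl idem)
lemma p12_in: "p12 x \<in> R12"
  by (simp add: p12_def efl)
lemma p21_in: "p21 x \<in> R21"
  by (simp add: p21_def efl)
lemma p22_in: "p22 x \<in> R22"
  by (simp add: p22_def efl)

lemma p11_add[simp]: "p11 (x+y) = p11 x + p11 y" by (simp add: p11_def)
lemma p12_add[simp]: "p12 (x+y) = p12 x + p12 y" by (simp add: p12_def)
lemma p21_add[simp]: "p21 (x+y) = p21 x + p21 y" by (simp add: p21_def)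
lemma p22_add[simp]: "p22 (x+y) = p22 x + p22 y" by (simp add: p22_def algebra_simps)
lemma p11_neg[simp]: "p11 (-x) = - p11 x" by (simp add: p11_def)
lemma p12_neg[simp]: "p12 (-x) = - p12 x" by (simp add: p12_def)
lemma p21_neg[simp]: "p21 (-x) = - p21 x" by (simp add: p21_def)
lemma p22_neg[simp]: "p22 (-x) = - p22 x" by (simp add: p22_def)
lemma p11_diff[simp]: "p11 (x-y) = p11 x - p11 y" by (simp add: p11_def)
lemma p12_diff[simp]: "p12 (x-y) = p12 x - p12 y" by (simp add: p12_def)
lemma p21_diff[simp]: "p21 (x-y) = p21 x - p21 y" by (simp add: p21_def)
lemma p22_diff[simp]: "p22 (x-y) = p22 x - p22 y" by (simp add: p22_def algebra_simps)
lemma p_zero[simp]: "p11 0 = 0" "p12 0 = 0" "p21 0 = 0" "p22 0 = 0"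
  by (simp_all add: p11_def p12_def p21_def p22_def)

lemma comp11: "x \<in> R11 \<Longrightarrow> p11 x = x \<and> p12 x = 0 \<and> p21 x = 0 \<and> p22 x = 0"
  by (simp add: p11_def p12_def p21_def p22_def)
lemma comp12: "x \<in> R12 \<Longrightarrow> p11 x = 0 \<and> p12 x = x \<and> p21 x = 0 \<and> p22 x = 0"
  by (simp add: p11_def p12_def p21_def p22_def)
lemma comp21: "x \<in> R21 \<Longrightarrow> p11 x = 0 \<and> p12 x = 0 \<and> p21 x = x \<and> p22 x = 0"
  by (simp add: p11_def p12_def p21_def p22_def)
lemma comp22: "x \<in> R22 \<Longrightarrow> p11 x = 0 \<and> p12 x = 0 \<and> p21 x = 0 \<and> p22 x = x"
  by (simp add: p11_def p12_def p21_def p22_def)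

lemma m11_11: "x \<in> R11 \<Longrightarrow> y \<in> R11 \<Longrightarrow> x*y \<in> R11"
  by (simp add: E1'[of x y] E2'[of x y])
lemma m11_12: "x \<in> R11 \<Longrightarrow> y \<in> R12 \<Longrightarrow> x*y \<in> R12"
  by (simp add: E1'[of x y] E2'[of x y])
lemma m12_21: "x \<in> R12 \<Longrightarrow> y \<in> R21 \<Longrightarrow> x*y \<in> R11"
  by (simp add: E1'[of x y] E2'[of x y])
lemma m12_22: "x \<in> R12 \<Longrightarrow> y \<in> R22 \<Longrightarrow> x*y \<in> R12"
  by (simp add: E1'[of x y] E2'[of x y])
lemma m12_12: "x \<in> R12 \<Longrightarrow> y \<in> R12 \<Longrightarrow> x*y \<in> R21"
  by (simp add: E1'[of x y] E2'[of x y])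
lemma m21_11: "x \<in> R21 \<Longrightarrow> y \<in> R11 \<Longrightarrow> x*y \<in> R21"
  by (simp add: E1'[of x y] E2'[of x y])
lemma m21_12: "x \<in> R21 \<Longrightarrow> y \<in> R12 \<Longrightarrow> x*y \<in> R22"
  by (simp add: E1'[of x y] E2'[of x y])
lemma m21_21: "x \<in> R21 \<Longrightarrow> y \<in> R21 \<Longrightarrow> x*y \<in> R12"
  by (simp add: E1'[of x y] E2'[of x y])
lemma m22_21: "x \<in> R22 \<Longrightarrow> y \<in> R21 \<Longrightarrow> x*y \<in> R21"
  by (simp add: E1'[of x y] E2'[of x y])
lemma m22_22: "x \<in> R22 \<Longrightarrow> y \<in> R22 \<Longrightarrow> x*y \<in> R22"
  by (simp add: E1'[of x y] E2'[of x y])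

lemma z11_y: "x \<in> R11 \<Longrightarrow> e*y = 0 \<Longrightarrow> x*y = 0"
  using moufL[of e x y] by (simp add: efl)
lemma z11_21: "x \<in> R11 \<Longrightarrow> y \<in> R21 \<Longrightarrow> x*y = 0" by (rule z11_y) simp_all
lemma z11_22: "x \<in> R11 \<Longrightarrow> y \<in> R22 \<Longrightarrow> x*y = 0" by (rule z11_y) simp_all
lemma zx_11: "y \<in> R11 \<Longrightarrow> x*e = 0 \<Longrightarrow> x*y = 0"
  using moufR[of x e y] by (simp add: efl)
lemma z12_11: "x \<in> R12 \<Longrightarrow> y \<in> R11 \<Longrightarrow> x*y = 0" by (rule zx_11) simp_all
lemma z22_11: "x \<in> R22 \<Longrightarrow> y \<in> R11 \<Longrightarrow> x*y = 0" by (rule zx_11) simp_all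
lemma z22_12: assumes "x \<in> R22" "y \<in> R12" shows "x*y = 0"
proof -
  have a: "e*(x*y) = - (x*y)" using assms by (simp add: E1'[of x y])
  have b: "(x*y)*e = x*y" using assms by (simp add: E2'[of x y])
  have "(e*x)*(y*e) = (e*(x*y))*e" by (rule moufM)
  thus ?thesis using assms a b by simp
qed
lemma z21_22: assumes "x \<in> R21" "y \<in> R22" shows "x*y = 0"
proof -
  have a: "e*(x*y) = x*y" using assms by (simp add: E1'[of x y])
  have b: "(x*y)*e = - (x*y)" using assms by (simp add: E2'[of x y])
  have "(e*x)*(y*e) = (e*(x*y))*e" by (rule moufM)
  thus ?thesis using assms a b by simp
qed

lemma R_closed:
  "0 \<in> R11" "0 \<in> R12" "0 \<in> R21" "0 \<in> R22"
  "x \<in> R11 \<Longrightarrow> y \<in> R11 \<Longrightarrow> x + y \<in> R11"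
  "x \<in> R12 \<Longrightarrow> y \<in> R12 \<Longrightarrow> x + y \<in> R12"
  "x \<in> R21 \<Longrightarrow> y \<in> R21 \<Longrightarrow> x + y \<in> R21"
  "x \<in> R22 \<Longrightarrow> y \<in> R22 \<Longrightarrow> x + y \<in> R22"
  "x \<in> R11 \<Longrightarrow> y \<in> R11 \<Longrightarrow> x - y \<in> R11"
  "x \<in> R12 \<Longrightarrow> y \<in> R12 \<Longrightarrow> x - y \<in> R12"
  "x \<in> R21 \<Longrightarrow> y \<in> R21 \<Longrightarrow> x - y \<in> R21"
  "x \<in> R22 \<Longrightarrow> y \<in> R22 \<Longrightarrow> x - y \<in> R22"
  "x \<in> R11 \<Longrightarrow> - x \<in> R11"
  "x \<in> R12 \<Longrightarrow> - x \<in> R12"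
  "x \<in> R21 \<Longrightarrow> - x \<in> R21"
  "x \<in> R22 \<Longrightarrow> - x \<in> R22"
  by simp_all

lemma cm_add1[simp]: "commutator ((x::'a) + y) z = commutator x z + commutator y z"
  by (simp add: commutator_def algebra_simps)
lemma cm_add2[simp]: "commutator (z::'a) (x + y) = commutator z x + commutator z y"
  by (simp add: commutator_def algebra_simps)
lemma cm_neg1[simp]: "commutator (- (x::'a)) z = - commutator x z"
  by (simp add: commutator_def algebra_simps)
lemma cm_neg2[simp]: "commutator (z::'a) (- x) = - commutator z x"
  by (simp add: commutator_def algebra_simps)
lemma cm_diff1[simp]: "commutator ((x::'a) - y) z = commutator x z - commutator y z"
  by (simp add: commutator_def algebra_simps)
lemma cm_diff2[simp]: "commutator (z::'a) (x - y) = commutator z x - commutator z y"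
  by (simp add: commutator_def algebra_simps)
lemma cm_zero[simp]: "commutator (0::'a) z = 0" "commutator z (0::'a) = 0" "commutator (z::'a) z = 0"
  by (simp_all add: commutator_def)
lemma cm_anti: "commutator (x::'a) y = - commutator y x"
  by (simp add: commutator_def)

definition N :: "'a set" where "N = {t. p12 t = 0 \<and> p21 t = 0}"

lemma cm_te: "commutator t e = p21 t - p12 t"
  by (simp add: commutator_def p21_def p12_def)
lemma cm_tee: "commutator (commutator t e) e = p12 t + p21 t"
proof -
  have "commutator (commutator t e) e = commutator (p21 t) e - commutator (p12 t) e"
    by (simp add: cm_te)
  also have "commutator (p21 t) e = p21 t" using p21_in[of t] by (simp add: commutator_def)
  also have "commutator (p12 t) e = - p12 t" using p12_in[of t] by (simp add: commutator_def)
  finally show ?thesis by (simp add: algebra_simps)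
qed

lemma N_iff: "t \<in> N \<longleftrightarrow> commutator (commutator t e) e = 0"
proof
  assume "t \<in> N" thus "commutator (commutator t e) e = 0" by (simp add: N_def cm_tee)
next
  assume "commutator (commutator t e) e = 0"
  hence h: "p12 t + p21 t = 0" by (simp add: cm_tee)
  have "p12 (p12 t + p21 t) = p12 t" using comp12[OF p12_in[of t]] comp21[OF p21_in[of t]] by simp
  moreover have "p21 (p12 t + p21 t) = p21 t" using comp12[OF p12_in[of t]] comp21[OF p21_in[of t]] by simp
  ultimately show "t \<in> N" using h by (simp add: N_def)
qed

lemma N_closed: "0 \<in> N" "s \<in> N \<Longrightarrow> t \<in> N \<Longrightarrow> s + t \<in> N"
  "s \<in> N \<Longrightarrow> t \<in> N \<Longrightarrow> s - t \<in> N" "t \<in> N \<Longrightarrow> - t \<in> N"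
  by (simp_all add: N_def)

lemma N_cme: "t \<in> N \<Longrightarrow> commutator t e = 0" by (simp add: N_def cm_te)
lemma N_cem: "t \<in> N \<Longrightarrow> commutator e t = 0" using N_cme cm_anti by (metis neg_equal_0_iff_equal)
lemma N_split: "t \<in> N \<Longrightarrow> t = p11 t + p22 t"
  using decomp[of t] by (simp add: N_def)
lemma N_R12: "x \<in> R12 \<Longrightarrow> x \<in> N \<Longrightarrow> x = 0"
  using comp12[of x] by (simp add: N_def)
lemma N_R21: "x \<in> R21 \<Longrightarrow> x \<in> N \<Longrightarrow> x = 0"
  using comp21[of x] by (simp add: N_def)
lemma N_diag: "a \<in> R11 \<Longrightarrow> b \<in> R22 \<Longrightarrow> a + b \<in> N"
  using comp11[of a] comp22[of b] by (simp add: N_def)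

lemma ce12: "c \<in> R12 \<Longrightarrow> commutator e c = c \<and> commutator c e = - c"
  by (simp add: commutator_def)
lemma ce21: "c \<in> R21 \<Longrightarrow> commutator e c = - c \<and> commutator c e = c"
  by (simp add: commutator_def)

lemma cm12_21_N: "b \<in> R12 \<Longrightarrow> c \<in> R21 \<Longrightarrow> commutator b c \<in> N"
proof -
  assume b: "b \<in> R12" and c: "c \<in> R21"
  have "b*c + (- (c*b)) \<in> N" by (rule N_diag[OF m12_21[OF b c] R_closed(16)[OF m21_12[OF c b]]])
  thus ?thesis by (simp add: commutator_def)
qed
lemma cm21_12_N: "b \<in> R21 \<Longrightarrow> c \<in> R12 \<Longrightarrow> commutator b c \<in> N"
proof -
  assume b: "b \<in> R21" and c: "c \<in> R12"
  have "c*b + (- (b*c)) \<in> N" by (rule N_diag[OF m12_21[OF c b] R_closed(16)[OF m21_12[OF b c]]])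
  hence "- (c*b + (- (b*c))) \<in> N" by (rule N_closed(4))
  thus ?thesis by (simp add: commutator_def algebra_simps)
qed
lemma cm12_12: "b \<in> R12 \<Longrightarrow> c \<in> R12 \<Longrightarrow> commutator b c \<in> R21"
  unfolding commutator_def by (rule R_closed(11)[OF m12_12 m12_12])
lemma cm21_21: "b \<in> R21 \<Longrightarrow> c \<in> R21 \<Longrightarrow> commutator b c \<in> R12"
  unfolding commutator_def by (rule R_closed(10)[OF m21_21 m21_21])

lemma cmN_12: assumes "t \<in> N" "c \<in> R12" shows "commutator t c \<in> R12"
proof -
  have t: "t = p11 t + p22 t" using N_split[OF assms(1)] .
  have "commutator (p11 t + p22 t) c = (p11 t * c - c * p11 t) + (p22 t * c - c * p22 t)"
    by (simp add: commutator_def)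
  also have "\<dots> = p11 t * c - c * p22 t"
    using z12_11[OF assms(2) p11_in] z22_12[OF p22_in assms(2)] by simp
  also have "\<dots> \<in> R12"
    by (rule R_closed(10)[OF m11_12[OF p11_in assms(2)] m12_22[OF assms(2) p22_in]])
  finally show ?thesis using t by simp
qed
lemma cmN_21: assumes "t \<in> N" "c \<in> R21" shows "commutator t c \<in> R21"
proof -
  have t: "t = p11 t + p22 t" using N_split[OF assms(1)] .
  have "commutator (p11 t + p22 t) c = (p11 t * c - c * p11 t) + (p22 t * c - c * p22 t)"
    by (simp add: commutator_def)
  also have "\<dots> = p22 t * c - c * p11 t"
    using z11_21[OF p11_in assms(2)] z21_22[OF assms(2) p22_in] by simp
  also have "\<dots> \<in> R21"
    by (rule R_closed(11)[OF m22_21[OF p22_in assms(2)] m21_11[OF assms(2) p11_in]])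
  finally show ?thesis using t by simp
qed
lemma cmN_11: assumes "t \<in> N" "c \<in> R11" shows "commutator t c \<in> R11"
proof -
  have t: "t = p11 t + p22 t" using N_split[OF assms(1)] .
  have "commutator (p11 t + p22 t) c = (p11 t * c - c * p11 t) + (p22 t * c - c * p22 t)"
    by (simp add: commutator_def)
  also have "\<dots> = p11 t * c - c * p11 t"
    using z22_11[OF p22_in assms(2)] z11_22[OF assms(2) p22_in] by simp
  also have "\<dots> \<in> R11"
    by (rule R_closed(9)[OF m11_11[OF p11_in assms(2)] m11_11[OF assms(2) p11_in]])
  finally show ?thesis using t by simp
qed
lemma cmN_22: assumes "t \<in> N" "c \<in> R22" shows "commutator t c \<in> R22"
proof -
  have t: "t = p11 t + p22 t" using N_split[OF assms(1)] .
  have "commutator (p11 t + p22 t) c = (p11 t * c - c * p11 t) + (p22 t * c - c * p22 t)"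
    by (simp add: commutator_def)
  also have "\<dots> = p22 t * c - c * p22 t"
    using z11_22[OF p11_in assms(2)] z22_11[OF assms(2) p11_in] by simp
  also have "\<dots> \<in> R22"
    by (rule R_closed(12)[OF m22_22[OF p22_in assms(2)] m22_22[OF assms(2) p22_in]])
  finally show ?thesis using t by simp
qed

end

locale lie3 = altr e for e :: "'a::{ab_group_add,times}" +
  fixes D :: "'a \<Rightarrow> 'a"
  assumes L3: "\<And>x y w. D (commutator (commutator x y) w) =
       commutator (commutator (D x) y) w + commutator (commutator x (D y)) w
       + commutator (commutator x y) (D w)"
begin

lemma D0[simp]: "D 0 = 0"
  using L3[of 0 0 0] by simp

definition T :: "'a \<Rightarrow> 'a \<Rightarrow> 'a" where "T u v = D (u + v) - D u - D v"

lemma P1: "commutator (commutator (T u v) x) y =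
  T (commutator (commutator u x) y) (commutator (commutator v x) y)"
  using L3[of "u+v" x y] L3[of u x y] L3[of v x y] by (simp add: T_def algebra_simps)

lemma P3: "commutator (commutator x y) (T u v) =
  T (commutator (commutator x y) u) (commutator (commutator x y) v)"
  using L3[of x y "u+v"] L3[of x y u] L3[of x y v] by (simp add: T_def algebra_simps)

lemma T0: "T 0 v = 0" "T v 0 = 0" by (simp_all add: T_def)

lemma EXP:
  assumes h1: "D (x1+x2) = D x1 + D x2 + s" and h2: "D (y1+y2) = D y1 + D y2 + s'"
    and h3: "commutator (commutator s (y1+y2)) w = 0"
    and h4: "commutator (commutator (x1+x2) s') w = 0"
  shows "D (commutator (commutator (x1+x2) (y1+y2)) w) =
    D (commutator (commutator x1 y1) w) + D (commutator (commutator x1 y2) w)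
    + D (commutator (commutator x2 y1) w) + D (commutator (commutator x2 y2) w)"
proof -
  have a1: "commutator (commutator (D (x1+x2)) (y1+y2)) w
     = commutator (commutator (D x1 + D x2) (y1+y2)) w + commutator (commutator s (y1+y2)) w"
    by (simp add: h1 algebra_simps)
  have a2: "commutator (commutator (x1+x2) (D (y1+y2))) w
     = commutator (commutator (x1+x2) (D y1 + D y2)) w + commutator (commutator (x1+x2) s') w"
    by (simp add: h2 algebra_simps)
  have "D (commutator (commutator (x1+x2) (y1+y2)) w) =
     commutator (commutator (D (x1+x2)) (y1+y2)) w + commutator (commutator (x1+x2) (D (y1+y2))) w
       + commutator (commutator (x1+x2) (y1+y2)) (D w)" by (rule L3)
  also have "\<dots> = commutator (commutator (D x1 + D x2) (y1+y2)) w
     + commutator (commutator (x1+x2) (D y1 + D y2)) w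
       + commutator (commutator (x1+x2) (y1+y2)) (D w)"
    by (simp only: a1 a2 h3 h4 add_0_right)
  also have "\<dots> = D (commutator (commutator x1 y1) w) + D (commutator (commutator x1 y2) w)
    + D (commutator (commutator x2 y1) w) + D (commutator (commutator x2 y2) w)"
    using L3[of x1 y1 w] L3[of x1 y2 w] L3[of x2 y1 w] L3[of x2 y2 w]
    by (simp add: algebra_simps)
  finally show ?thesis .
qed

lemma TN_gen: assumes "commutator (commutator a e) e = 0" shows "T a b \<in> N"
proof -
  have "commutator (commutator (T a b) e) e = T (commutator (commutator a e) e) (commutator (commutator b e) e)"
    by (rule P1)
  thus ?thesis using assms by (simp add: N_iff T0)
qed

lemma TeN: "T e b \<in> N" by (rule TN_gen) simp

lemma A1ii: assumes b: "b \<in> R12" and c: "c \<in> R21" shows "commutator (T e b) c = 0"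
proof -
  have bc: "commutator (commutator b c) e = 0" using N_cme[OF cm12_21_N[OF b c]] .
  have "commutator (commutator (T e b) c) e = T (commutator (commutator e c) e) (commutator (commutator b c) e)"
    by (rule P1)
  hence "commutator (commutator (T e b) c) e = 0" by (simp add: bc T0)
  moreover have "commutator (commutator (T e b) c) e = commutator (T e b) c"
    using cmN_21[OF TeN c] ce21 by blast
  ultimately show ?thesis by simp
qed

lemma A2ii: assumes b: "b \<in> R21" and c: "c \<in> R12" shows "commutator (T e b) c = 0"
proof -
  have bc: "commutator (commutator b c) e = 0" using N_cme[OF cm21_12_N[OF b c]] .
  have "commutator (commutator (T e b) c) e = T (commutator (commutator e c) e) (commutator (commutator b c) e)"
    by (rule P1)
  hence "commutator (commutator (T e b) c) e = 0" by (simp add: bc T0)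
  moreover have "commutator (commutator (T e b) c) e = - commutator (T e b) c"
    using cmN_12[OF TeN c] ce12 by blast
  ultimately show ?thesis by simp
qed

lemma B: assumes a: "a \<in> R12" and b: "b \<in> R21" shows "D (a + b) = D a + D b"
proof -
  define b' where "b' = - b"
  have b': "b' \<in> R21" using b by (simp add: b'_def)
  have h1: "D (e + a) = D e + D a + T e a" by (simp add: T_def)
  have h2: "D (e + b') = D e + D b' + T e b'" by (simp add: T_def)
  have h3: "commutator (commutator (T e a) (e + b')) e = 0"
    using N_cme[OF TeN[of a]] A1ii[OF a b'] by simp
  have h4: "commutator (commutator (e + a) (T e b')) e = 0"
  proof -
    have "commutator e (T e b') = 0" by (rule N_cem[OF TeN])
    moreover have "commutator a (T e b') = 0" using A2ii[OF b' a] cm_anti[of a "T e b'"] by simp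
    ultimately show ?thesis by simp
  qed
  have E: "D (commutator (commutator (e + a) (e + b')) e) =
    D (commutator (commutator e e) e) + D (commutator (commutator e b') e)
    + D (commutator (commutator a e) e) + D (commutator (commutator a b') e)"
    by (rule EXP[OF h1 h2 h3 h4])
  have v1: "commutator (commutator e b') e = b" using ce21[OF b'] by (simp add: b'_def)
  have v2: "commutator (commutator a e) e = a" using ce12[OF a] by simp
  have v3: "commutator (commutator a b') e = 0" using N_cme[OF cm12_21_N[OF a b']] .
  have v4: "commutator (commutator (e + a) (e + b')) e = b + a"
    using v1 v2 v3 by (simp add: algebra_simps)
  show ?thesis using E v1 v2 v3 v4 by (simp add: algebra_simps)
qed

lemma A1iii: assumes b: "b \<in> R12" and q: "q \<in> R12" shows "commutator (T e b) q = 0"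
proof -
  have bq: "commutator b q \<in> R21" by (rule cm12_12[OF b q])
  have "commutator (commutator (T e b) q) e = T (commutator (commutator e q) e) (commutator (commutator b q) e)"
    by (rule P1)
  also have "commutator (commutator e q) e = - q" using ce12[OF q] by simp
  also have "commutator (commutator b q) e = commutator b q" using ce21[OF bq] by simp
  also have "T (- q) (commutator b q) = 0" using B[OF _ bq, of "- q"] q by (simp add: T_def)
  finally have "commutator (commutator (T e b) q) e = 0" .
  moreover have "commutator (commutator (T e b) q) e = - commutator (T e b) q"
    using cmN_12[OF TeN q] ce12 by blast
  ultimately show ?thesis by simp
qed

lemma A2iii: assumes b: "b \<in> R21" and q: "q \<in> R21" shows "commutator (T e b) q = 0"
proof -
  have bq: "commutator b q \<in> R12" by (rule cm21_21[OF b q])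
  have "commutator (commutator (T e b) q) e = T (commutator (commutator e q) e) (commutator (commutator b q) e)"
    by (rule P1)
  also have "commutator (commutator e q) e = - q" using ce21[OF q] by simp
  also have "commutator (commutator b q) e = - commutator b q" using ce12[OF bq] by simp
  also have "T (- q) (- commutator b q) = 0"
    using B[of "- commutator b q" "- q"] q bq by (simp add: T_def algebra_simps)
  finally have "commutator (commutator (T e b) q) e = 0" .
  moreover have "commutator (commutator (T e b) q) e = commutator (T e b) q"
    using cmN_21[OF TeN q] ce21 by blast
  ultimately show ?thesis by simp
qed

lemma C12: assumes p: "p \<in> R12" and q: "q \<in> R12" shows "D (p + q) = D p + D q"
proof -
  define q' where "q' = - q"
  have q': "q' \<in> R12" using q by (simp add: q'_def)
  have h1: "D (e + p) = D e + D p + T e p" by (simp add: T_def)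
  have h2: "D (e + q') = D e + D q' + T e q'" by (simp add: T_def)
  have h3: "commutator (commutator (T e p) (e + q')) e = 0"
    using N_cme[OF TeN[of p]] A1iii[OF p q'] by simp
  have h4: "commutator (commutator (e + p) (T e q')) e = 0"
  proof -
    have "commutator e (T e q') = 0" by (rule N_cem[OF TeN])
    moreover have "commutator p (T e q') = 0" using A1iii[OF q' p] cm_anti[of p "T e q'"] by simp
    ultimately show ?thesis by simp
  qed
  have E: "D (commutator (commutator (e + p) (e + q')) e) =
    D (commutator (commutator e e) e) + D (commutator (commutator e q') e)
    + D (commutator (commutator p e) e) + D (commutator (commutator p q') e)"
    by (rule EXP[OF h1 h2 h3 h4])
  have pq: "commutator p q' \<in> R21" by (rule cm12_12[OF p q'])
  have v1: "commutator (commutator e q') e = q" using ce12[OF q'] by (simp add: q'_def)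
  have v2: "commutator (commutator p e) e = p" using ce12[OF p] by simp
  have v3: "commutator (commutator p q') e = commutator p q'" using ce21[OF pq] by simp
  have v4: "commutator (commutator (e + p) (e + q')) e = (p + q) + commutator p q'"
    using v1 v2 v3 by (simp add: algebra_simps)
  have Bv: "D ((p + q) + commutator p q') = D (p + q) + D (commutator p q')"
    by (rule B[OF _ pq]) (use p q in simp)
  show ?thesis using E v1 v2 v3 v4 Bv by (simp add: algebra_simps)
qed

lemma C21: assumes p: "p \<in> R21" and q: "q \<in> R21" shows "D (p + q) = D p + D q"
proof -
  define q' where "q' = - q"
  have q': "q' \<in> R21" using q by (simp add: q'_def)
  have h1: "D (e + p) = D e + D p + T e p" by (simp add: T_def)
  have h2: "D (e + q') = D e + D q' + T e q'" by (simp add: T_def)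
  have h3: "commutator (commutator (T e p) (e + q')) e = 0"
    using N_cme[OF TeN[of p]] A2iii[OF p q'] by simp
  have h4: "commutator (commutator (e + p) (T e q')) e = 0"
  proof -
    have "commutator e (T e q') = 0" by (rule N_cem[OF TeN])
    moreover have "commutator p (T e q') = 0" using A2iii[OF q' p] cm_anti[of p "T e q'"] by simp
    ultimately show ?thesis by simp
  qed
  have E: "D (commutator (commutator (e + p) (e + q')) e) =
    D (commutator (commutator e e) e) + D (commutator (commutator e q') e)
    + D (commutator (commutator p e) e) + D (commutator (commutator p q') e)"
    by (rule EXP[OF h1 h2 h3 h4])
  have pq: "commutator p q' \<in> R12" by (rule cm21_21[OF p q'])
  have v1: "commutator (commutator e q') e = q" using ce21[OF q'] by (simp add: q'_def)
  have v2: "commutator (commutator p e) e = p" using ce21[OF p] by simp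
  have v3: "commutator (commutator p q') e = - commutator p q'" using ce12[OF pq] by simp
  have v4: "commutator (commutator (e + p) (e + q')) e = (- commutator p q') + (p + q)"
    using v1 v2 v3 by (simp add: algebra_simps)
  have Bv: "D ((- commutator p q') + (p + q)) = D (- commutator p q') + D (p + q)"
    by (rule B) (use p q pq in simp_all)
  show ?thesis using E v1 v2 v3 v4 Bv by (simp add: algebra_simps)
qed

lemma TM: "T (p12 u + p21 u) (p12 v + p21 v) = 0"
proof -
  have "D ((p12 u + p21 u) + (p12 v + p21 v)) = D ((p12 u + p12 v) + (p21 u + p21 v))"
    by (simp add: algebra_simps)
  also have "\<dots> = D (p12 u + p12 v) + D (p21 u + p21 v)"
    by (rule B) (use p12_in p21_in in simp_all)
  also have "\<dots> = D (p12 u) + D (p12 v) + (D (p21 u) + D (p21 v))"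
    using C12[OF p12_in p12_in] C21[OF p21_in p21_in] by simp
  finally show ?thesis
    using B[OF p12_in p21_in, of u u] B[OF p12_in p21_in, of v v] by (simp add: T_def algebra_simps)
qed

lemma TN: "T u v \<in> N"
proof -
  have "commutator (commutator (T u v) e) e = T (commutator (commutator u e) e) (commutator (commutator v e) e)"
    by (rule P1)
  thus ?thesis by (simp add: N_iff cm_tee TM)
qed

lemma T_R12: assumes c: "c \<in> R12" shows "commutator c (T u v) = 0"
proof -
  have "commutator (commutator e c) (T u v) = T (commutator (commutator e c) u) (commutator (commutator e c) v)"
    by (rule P3)
  hence "commutator c (T u v) \<in> N" using ce12[OF c] TN by simp
  moreover have "commutator c (T u v) \<in> R12"
    using cmN_12[OF TN c] cm_anti[of c "T u v"] by simp
  ultimately show ?thesis using N_R12 by blast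
qed

lemma T_R21: assumes c: "c \<in> R21" shows "commutator c (T u v) = 0"
proof -
  have "commutator (commutator c e) (T u v) = T (commutator (commutator c e) u) (commutator (commutator c e) v)"
    by (rule P3)
  hence "commutator c (T u v) \<in> N" using ce21[OF c] TN by simp
  moreover have "commutator c (T u v) \<in> R21"
    using cmN_21[OF TN c] cm_anti[of c "T u v"] by simp
  ultimately show ?thesis using N_R21 by blast
qed

lemma T_R11: assumes x: "x \<in> R11"
  shows "commutator (T u v) x \<in> R11 \<and> (\<forall>c\<in>R12. commutator (T u v) x * c = 0)
     \<and> (\<forall>c\<in>R21. c * commutator (T u v) x = 0)"
proof -
  define k where "k = commutator (T u v) x"
  have k: "k \<in> R11" unfolding k_def by (rule cmN_11[OF TN x])
  have kN: "commutator k c \<in> N" for c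
    unfolding k_def P1 by (rule TN)
  have "k * c = 0" if c: "c \<in> R12" for c
  proof -
    have "commutator k c = k * c" using z12_11[OF c k] by (simp add: commutator_def)
    moreover have "k * c \<in> R12" by (rule m11_12[OF k c])
    ultimately show ?thesis using kN[of c] N_R12 by metis
  qed
  moreover have "c * k = 0" if c: "c \<in> R21" for c
  proof -
    have "commutator k c = - (c * k)" using z11_21[OF k c] by (simp add: commutator_def)
    moreover have "- (c * k) \<in> R21" using m21_11[OF c k] by simp
    ultimately have "- (c * k) = 0" using kN[of c] N_R21 by metis
    thus ?thesis by simp
  qed
  ultimately show ?thesis using k by (simp add: k_def)
qed

lemma T_R22: assumes x: "x \<in> R22"
  shows "commutator (T u v) x \<in> R22 \<and> (\<forall>c\<in>R12. c * commutator (T u v) x = 0)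
     \<and> (\<forall>c\<in>R21. commutator (T u v) x * c = 0)"
proof -
  define k where "k = commutator (T u v) x"
  have k: "k \<in> R22" unfolding k_def by (rule cmN_22[OF TN x])
  have kN: "commutator k c \<in> N" for c
    unfolding k_def P1 by (rule TN)
  have "c * k = 0" if c: "c \<in> R12" for c
  proof -
    have "commutator k c = - (c * k)" using z22_12[OF k c] by (simp add: commutator_def)
    moreover have "- (c * k) \<in> R12" using m12_22[OF c k] by simp
    ultimately have "- (c * k) = 0" using kN[of c] N_R12 by metis
    thus ?thesis by simp
  qed
  moreover have "k * c = 0" if c: "c \<in> R21" for c
  proof -
    have "commutator k c = k * c" using z21_22[OF c k] by (simp add: commutator_def)
    moreover have "k * c \<in> R21" by (rule m22_21[OF k c])
    ultimately show ?thesis using kN[of c] N_R21 by metis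
  qed
  ultimately show ?thesis using k by (simp add: k_def)
qed

end

context altr begin

definition Ann :: "'a set \<Rightarrow> 'a set" where "Ann I = {x. \<forall>k\<in>I. k*x = 0 \<and> x*k = 0}"

lemma Ann_ideal:
  fixes I :: "'a set"
  assumes I: "\<And>k r. k \<in> I \<Longrightarrow> r*k \<in> I \<and> k*r \<in> I"
  shows "ring_ideal (Ann I)"
proof -
  have mul: "r*x \<in> Ann I \<and> x*r \<in> Ann I" if x: "x \<in> Ann I" for x r
  proof -
    have "k*(r*x) = 0 \<and> (r*x)*k = 0 \<and> k*(x*r) = 0 \<and> (x*r)*k = 0" if k: "k \<in> I" for k
    proof -
      have xk: "k*x = 0" "x*k = 0" using x k by (auto simp: Ann_def)
      have rk: "(r*k)*x = 0" "x*(r*k) = 0" using x I[OF k] by (auto simp: Ann_def)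
      have kr: "(k*r)*x = 0" "x*(k*r) = 0" using x I[OF k] by (auto simp: Ann_def)
      have a1: "assoc r x k = 0"
        using alt2[of r x k] rk xk by (simp add: assoc_def)
      have a2: "assoc k r x = 0" using cyc[of k r x] a1 by simp
      have a3: "assoc x r k = 0" using cyc[of x r k] rk xk by (simp add: assoc_def)
      have a4: "assoc k x r = 0" using alt2[of k x r] cyc[of k r x] a1 by simp
      have "(r*x)*k = 0" using assoc_eq[of r x k] a1 xk by simp
      moreover have "k*(r*x) = 0" using assoc_eq[of k r x] a2 kr by simp
      moreover have "(x*r)*k = 0" using assoc_eq[of x r k] a3 rk by simp
      moreover have "k*(x*r) = 0" using assoc_eq[of k x r] a4 xk by simp
      ultimately show ?thesis by simp
    qed
    thus ?thesis by (auto simp: Ann_def)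
  qed
  show ?thesis unfolding ring_ideal_def
    using mul by (auto simp: Ann_def)
qed

lemma prime_kill:
  fixes I J :: "'a set"
  assumes pr: "prime_ring TYPE('a)" and I: "ring_ideal I"
    and J: "ring_ideal J" and z: "\<And>a b. a \<in> I \<Longrightarrow> b \<in> J \<Longrightarrow> a*b = 0"
    and j: "j \<in> J" "j \<noteq> 0" and k: "k \<in> I"
  shows "k = 0"
proof (rule ccontr)
  assume "k \<noteq> 0"
  hence "I \<noteq> {0}" using k by auto
  moreover have "J \<noteq> {0}" using j by auto
  moreover have "ring_ideal I \<and> ring_ideal J \<and> I \<noteq> {0} \<and> J \<noteq> {0} \<longrightarrow> (\<exists>a\<in>I. \<exists>b\<in>J. a*b \<noteq> 0)"
    using pr unfolding prime_ring_def by blast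
  ultimately obtain a b where "a \<in> I" "b \<in> J" "a*b \<noteq> 0"
    using I J by blast
  thus False using z by blast
qed

definition Bad11 :: "'a set" where
  "Bad11 = {k. k \<in> R11 \<and> (\<forall>c\<in>R12. k*c = 0) \<and> (\<forall>c\<in>R21. c*k = 0)}"
definition Bad22 :: "'a set" where
  "Bad22 = {k. k \<in> R22 \<and> (\<forall>c\<in>R12. c*k = 0) \<and> (\<forall>c\<in>R21. k*c = 0)}"

lemma Bad11_l: assumes k: "k \<in> Bad11" and r: "r \<in> R11" shows "r*k \<in> Bad11"
proof -
  have k11: "k \<in> R11" and kc: "\<And>c. c \<in> R12 \<Longrightarrow> k*c = 0" and ck: "\<And>c. c \<in> R21 \<Longrightarrow> c*k = 0"
    using k by (auto simp: Bad11_def)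
  have "(r*k)*c = 0" if c: "c \<in> R12" for c
  proof -
    have "assoc r k c = assoc k c r" by (rule cyc)
    also have "\<dots> = 0" using kc[OF c] z12_11[OF c r] by (simp add: assoc_def)
    finally show ?thesis using assoc_eq[of r k c] kc[OF c] by simp
  qed
  moreover have "c*(r*k) = 0" if c: "c \<in> R21" for c
  proof -
    have cr: "c*r \<in> R21" by (rule m21_11[OF c r])
    have "assoc c r k = assoc k c r" using cyc[of c r k] cyc[of r k c] by simp
    also have "\<dots> = 0" using z11_21[OF k11 c] z11_21[OF k11 cr] by (simp add: assoc_def)
    finally show ?thesis using assoc_eq[of c r k] ck[OF cr] by simp
  qed
  ultimately show ?thesis using m11_11[OF r k11] by (simp add: Bad11_def)
qed

lemma Bad11_r: assumes k: "k \<in> Bad11" and r: "r \<in> R11" shows "k*r \<in> Bad11"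
proof -
  have k11: "k \<in> R11" and kc: "\<And>c. c \<in> R12 \<Longrightarrow> k*c = 0" and ck: "\<And>c. c \<in> R21 \<Longrightarrow> c*k = 0"
    using k by (auto simp: Bad11_def)
  have "(k*r)*c = 0" if c: "c \<in> R12" for c
  proof -
    have "assoc k r c = - assoc k c r" by (rule alt2)
    also have "\<dots> = 0" using kc[OF c] z12_11[OF c r] by (simp add: assoc_def)
    finally show ?thesis using assoc_eq[of k r c] kc[OF m11_12[OF r c]] by simp
  qed
  moreover have "c*(k*r) = 0" if c: "c \<in> R21" for c
  proof -
    have cr: "c*r \<in> R21" by (rule m21_11[OF c r])
    have "assoc c k r = - assoc k c r" by (rule alt1)
    also have "\<dots> = 0" using z11_21[OF k11 c] z11_21[OF k11 cr] by (simp add: assoc_def)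
    finally show ?thesis using assoc_eq[of c k r] ck[OF c] by simp
  qed
  ultimately show ?thesis using m11_11[OF k11 r] by (simp add: Bad11_def)
qed

lemma Bad11_mult: assumes k: "k \<in> Bad11" shows "r*k \<in> Bad11 \<and> k*r \<in> Bad11"
proof -
  have k11: "k \<in> R11" and kc: "\<And>c. c \<in> R12 \<Longrightarrow> k*c = 0" and ck: "\<And>c. c \<in> R21 \<Longrightarrow> c*k = 0"
    using k by (auto simp: Bad11_def)
  have "r*k = (p11 r + p12 r + p21 r + p22 r)*k" using decomp[of r] by simp
  also have "\<dots> = p11 r * k"
    using z12_11[OF p12_in k11] ck[OF p21_in] z22_11[OF p22_in k11] by simp
  finally have 1: "r*k = p11 r * k" .
  have "k*r = k*(p11 r + p12 r + p21 r + p22 r)" using decomp[of r] by simp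
  also have "\<dots> = k * p11 r"
    using kc[OF p12_in] z11_21[OF k11 p21_in] z11_22[OF k11 p22_in] by simp
  finally have 2: "k*r = k * p11 r" .
  show ?thesis using 1 2 Bad11_l[OF k p11_in] Bad11_r[OF k p11_in] by simp
qed

lemma Bad22_l: assumes k: "k \<in> Bad22" and r: "r \<in> R22" shows "r*k \<in> Bad22"
proof -
  have k22: "k \<in> R22" and ck: "\<And>c. c \<in> R12 \<Longrightarrow> c*k = 0" and kc: "\<And>c. c \<in> R21 \<Longrightarrow> k*c = 0"
    using k by (auto simp: Bad22_def)
  have rk: "r*k \<in> R22" by (rule m22_22[OF r k22])
  have "c*(r*k) = 0" if c: "c \<in> R12" for c
  proof -
    have cr: "c*r \<in> R12" by (rule m12_22[OF c r])
    have "assoc c r k = assoc r k c" by (rule cyc)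
    also have "\<dots> = 0" using z22_12[OF rk c] z22_12[OF k22 c] by (simp add: assoc_def)
    finally show ?thesis using assoc_eq[of c r k] ck[OF cr] by simp
  qed
  moreover have "(r*k)*c = 0" if c: "c \<in> R21" for c
  proof -
    have "assoc r k c = assoc k c r" by (rule cyc)
    also have "\<dots> = 0" using kc[OF c] z21_22[OF c r] by (simp add: assoc_def)
    finally show ?thesis using assoc_eq[of r k c] kc[OF c] by simp
  qed
  ultimately show ?thesis using rk by (simp add: Bad22_def)
qed

lemma Bad22_r: assumes k: "k \<in> Bad22" and r: "r \<in> R22" shows "k*r \<in> Bad22"
proof -
  have k22: "k \<in> R22" and ck: "\<And>c. c \<in> R12 \<Longrightarrow> c*k = 0" and kc: "\<And>c. c \<in> R21 \<Longrightarrow> k*c = 0"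
    using k by (auto simp: Bad22_def)
  have kr: "k*r \<in> R22" by (rule m22_22[OF k22 r])
  have "c*(k*r) = 0" if c: "c \<in> R12" for c
  proof -
    have cr: "c*r \<in> R12" by (rule m12_22[OF c r])
    have "assoc c k r = - assoc k c r" by (rule alt1)
    also have "\<dots> = 0" using z22_12[OF k22 c] z22_12[OF k22 cr] by (simp add: assoc_def)
    finally show ?thesis using assoc_eq[of c k r] ck[OF c] by simp
  qed
  moreover have "(k*r)*c = 0" if c: "c \<in> R21" for c
  proof -
    have rc: "r*c \<in> R21" by (rule m22_21[OF r c])
    have "assoc k r c = - assoc k c r" by (rule alt2)
    also have "\<dots> = 0" using kc[OF c] z21_22[OF c r] by (simp add: assoc_def)
    finally show ?thesis using assoc_eq[of k r c] kc[OF rc] by simp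
  qed
  ultimately show ?thesis using kr by (simp add: Bad22_def)
qed

lemma Bad22_mult: assumes k: "k \<in> Bad22" shows "r*k \<in> Bad22 \<and> k*r \<in> Bad22"
proof -
  have k22: "k \<in> R22" and ck: "\<And>c. c \<in> R12 \<Longrightarrow> c*k = 0" and kc: "\<And>c. c \<in> R21 \<Longrightarrow> k*c = 0"
    using k by (auto simp: Bad22_def)
  have "r*k = (p11 r + p12 r + p21 r + p22 r)*k" using decomp[of r] by simp
  also have "\<dots> = p22 r * k"
    using z11_22[OF p11_in k22] ck[OF p12_in] z21_22[OF p21_in k22] by simp
  finally have 1: "r*k = p22 r * k" .
  have "k*r = k*(p11 r + p12 r + p21 r + p22 r)" using decomp[of r] by simp
  also have "\<dots> = k * p22 r"
    using z22_11[OF k22 p11_in] z22_12[OF k22 p12_in] kc[OF p21_in] by simp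
  finally have 2: "k*r = k * p22 r" .
  show ?thesis using 1 2 Bad22_l[OF k p22_in] Bad22_r[OF k p22_in] by simp
qed

lemma Bad11_ideal: "ring_ideal Bad11"
  unfolding ring_ideal_def using Bad11_mult by (auto simp: Bad11_def)
lemma Bad22_ideal: "ring_ideal Bad22"
  unfolding ring_ideal_def using Bad22_mult by (auto simp: Bad22_def)

lemma Bad11_zero:
  assumes pr: "prime_ring TYPE('a)" and nt: "\<not> (\<forall>x. e * x = x \<and> x * e = x)"
    and k: "k \<in> Bad11" shows "k = 0"
proof -
  have AI: "ring_ideal (Ann Bad11)" by (rule Ann_ideal) (rule Bad11_mult)
  obtain x where x: "\<not> (e * x = x \<and> x * e = x)" using nt by blast
  have "p12 x \<noteq> 0 \<or> p21 x \<noteq> 0 \<or> p22 x \<noteq> 0"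
  proof (rule ccontr)
    assume "\<not> ?thesis"
    hence "x = p11 x" using decomp[of x] by simp
    thus False using x p11_in[of x] by (metis in11)
  qed
  then obtain j where j: "j \<in> Ann Bad11" "j \<noteq> 0"
  proof (elim disjE)
    assume "p12 x \<noteq> 0"
    moreover have "p12 x \<in> Ann Bad11"
    proof -
      have "k * p12 x = 0 \<and> p12 x * k = 0" if "k \<in> Bad11" for k
        using that p12_in[of x] z12_11[OF p12_in[of x]] unfolding Bad11_def by blast
      thus ?thesis by (simp add: Ann_def)
    qed
    ultimately show ?thesis using that by blast
  next
    assume "p21 x \<noteq> 0"
    moreover have "p21 x \<in> Ann Bad11"
    proof -
      have "k * p21 x = 0 \<and> p21 x * k = 0" if "k \<in> Bad11" for k
        using that p21_in[of x] z11_21[OF _ p21_in[of x]] unfolding Bad11_def by blast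
      thus ?thesis by (simp add: Ann_def)
    qed
    ultimately show ?thesis using that by blast
  next
    assume "p22 x \<noteq> 0"
    moreover have "p22 x \<in> Ann Bad11"
    proof -
      have "k * p22 x = 0 \<and> p22 x * k = 0" if "k \<in> Bad11" for k
        using that z11_22[OF _ p22_in[of x]] z22_11[OF p22_in[of x]] unfolding Bad11_def by blast
      thus ?thesis by (simp add: Ann_def)
    qed
    ultimately show ?thesis using that by blast
  qed
  show ?thesis
    by (rule prime_kill[OF pr Bad11_ideal AI _ j k]) (auto simp: Ann_def)
qed

lemma Bad22_zero:
  assumes pr: "prime_ring TYPE('a)" and ne: "e \<noteq> 0"
    and k: "k \<in> Bad22" shows "k = 0"
proof -
  have AI: "ring_ideal (Ann Bad22)" by (rule Ann_ideal) (rule Bad22_mult)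
  have "e \<in> Ann Bad22" by (auto simp: Ann_def Bad22_def)
  show ?thesis
    by (rule prime_kill[OF pr Bad22_ideal AI _ \<open>e \<in> Ann Bad22\<close> ne k]) (auto simp: Ann_def)
qed

end

context lie3 begin

lemma T_center:
  assumes pr: "prime_ring TYPE('a)" and ne: "e \<noteq> 0" and nt: "\<not> (\<forall>x. e * x = x \<and> x * e = x)"
  shows "T u v \<in> center"
proof -
  have "commutator (T u v) x = 0" for x
  proof -
    have 1: "commutator (T u v) (p12 x) = 0"
      using T_R12[OF p12_in, of x u v] cm_anti[of "T u v" "p12 x"] by simp
    have 2: "commutator (T u v) (p21 x) = 0"
      using T_R21[OF p21_in, of x u v] cm_anti[of "T u v" "p21 x"] by simp
    have 3: "commutator (T u v) (p11 x) = 0"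
      using T_R11[OF p11_in[of x], where u=u and v=v] Bad11_zero[OF pr nt] unfolding Bad11_def by blast
    have 4: "commutator (T u v) (p22 x) = 0"
      using T_R22[OF p22_in[of x], where u=u and v=v] Bad22_zero[OF pr ne] unfolding Bad22_def by blast
    have "commutator (T u v) x = commutator (T u v) (p11 x + p12 x + p21 x + p22 x)"
      using decomp[of x] by simp
    also have "\<dots> = 0" using 1 2 3 4 by simp
    finally show ?thesis .
  qed
  thus ?thesis by (simp add: center_def)
qed

end

theorem corollary2p8:
  fixes e1 :: "'a::{ab_group_add,times}" and D :: "'a \<Rightarrow> 'a"
  assumes "nonassoc_ring TYPE('a)"
    and "alternative TYPE('a)"
    and "three_torsion_free TYPE('a)"
    and "prime_ring TYPE('a)"
    and "e1 \<noteq> 0" and "e1 * e1 = e1"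
    and "\<not> (\<forall>x. e1 * x = x \<and> x * e1 = x)"
    and "mult_lie_3_derivation D"
  shows "\<forall>a b. D (a + b) - D a - D b \<in> center"
proof -
  interpret lie3 e1 D
  proof (unfold_locales)
    show "\<And>x y z::'a. x * (y + z) = x * y + x * z" using assms(1) by (simp add: nonassoc_ring_def)
    show "\<And>x y z::'a. (x + y) * z = x * z + y * z" using assms(1) by (simp add: nonassoc_ring_def)
    show "\<And>x y::'a. assoc x x y = 0" using assms(2) by (simp add: alternative_def)
    show "\<And>x y::'a. assoc y x x = 0" using assms(2) by (simp add: alternative_def)
    show "e1 * e1 = e1" by (rule assms(6))
    show "\<And>x y w. D (commutator (commutator x y) w) =
       commutator (commutator (D x) y) w + commutator (commutator x (D y)) w
       + commutator (commutator x y) (D w)"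
      using assms(8) by (simp add: mult_lie_3_derivation_def)
  qed
  show ?thesis
    using T_center[OF assms(4) assms(5) assms(7)] by (simp add: T_def)
qed


end
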